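(* The graph $\mathcal{G}_3$ has finitely many connected components.
   Context: A square is a finite non-empty word of the form $XX$. A square reduction replaces a word $UXXV$ (with $X$ non-empty) by $UXV$. For $k\geqslant 1$, $\mathcal{G}_k$ is the undirected graph whose vertices are all finite non-empty words over a fixed $k$-letter alphabet, where two words $U,W$ are adjacent whenever one of them can be obtained from the other by a single square reduction. *)

theory Defs
  imports Main
begin

definition square_reduction :: "'a list \<Rightarrow> 'a list \<Rightarrow> bool" where
  "square_reduction W W' \<longleftrightarrow>
     (\<exists>U X V. X \<noteq> [] \<and> W = U @ X @ X @ V \<and> W' = U @ X @ V)"

text \<open>Vertices of G_k: all finite non-empty words (over the alphabet UNIV :: 'a set).\<close>
definition sq_vertices :: "'a list set" where
  "sq_vertices = {w. w \<noteq> []}"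

definition sq_adj :: "'a list \<Rightarrow> 'a list \<Rightarrow> bool" where
  "sq_adj U W \<longleftrightarrow> U \<in> sq_vertices \<and> W \<in> sq_vertices \<and>
     (square_reduction U W \<or> square_reduction W U)"

definition sq_connected :: "'a list \<Rightarrow> 'a list \<Rightarrow> bool" where
  "sq_connected U W \<longleftrightarrow> (U, W) \<in> {(x, y). sq_adj x y}\<^sup>*"

definition sq_components :: "'a list set set" where
  "sq_components = (\<lambda>w. {u. sq_connected w u}) ` sq_vertices"

end

theory Submission
  imports Defs
begin

lemma sqc_refl: "sq_connected u u"
  unfolding sq_connected_def by simp

lemma sqc_trans[trans]: "sq_connected a b \<Longrightarrow> sq_connected b c \<Longrightarrow> sq_connected a c"
  unfolding sq_connected_def by (rule rtrancl_trans)

lemma adj_sym: "sq_adj u v \<Longrightarrow> sq_adj v u"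
  unfolding sq_adj_def by blast

lemma sqc_sym: "sq_connected a b \<Longrightarrow> sq_connected b a"
  unfolding sq_connected_def
proof (induction rule: rtrancl_induct)
  case base then show ?case by simp
next
  case (step y z)
  then have "(z, y) \<in> {(x, y). sq_adj x y}" using adj_sym by blast
  with step show ?case by (meson converse_rtrancl_into_rtrancl)
qed

lemma red0: "X \<noteq> [] \<Longrightarrow> sq_connected (U@X@X@V) (U@X@V)"
proof -
  assume X: "X \<noteq> []"
  have "sq_adj (U@X@X@V) (U@X@V)"
    unfolding sq_adj_def sq_vertices_def square_reduction_def using X by blast
  then show ?thesis unfolding sq_connected_def by blast
qed

lemma red: "A = U@X@X@V \<Longrightarrow> B = U@X@V \<Longrightarrow> sq_connected A B"
  using red0 sqc_refl by (cases "X = []") auto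

lemma red': "A = U@X@V \<Longrightarrow> B = U@X@X@V \<Longrightarrow> sq_connected A B"
  using red sqc_sym by blast

lemma adj_cong: "sq_adj u v \<Longrightarrow> sq_adj (P@u@S) (P@v@S)"
proof -
  assume "sq_adj u v"
  then have h: "square_reduction u v \<or> square_reduction v u" unfolding sq_adj_def by blast
  have "square_reduction u v \<Longrightarrow> square_reduction (P@u@S) (P@v@S)" for u v
    unfolding square_reduction_def
  proof -
    assume "\<exists>U X V. X \<noteq> [] \<and> u = U @ X @ X @ V \<and> v = U @ X @ V"
    then obtain U X V where "X \<noteq> []" "u = U @ X @ X @ V" "v = U @ X @ V" by blast
    then show "\<exists>U X V. X \<noteq> [] \<and> P@u@S = U @ X @ X @ V \<and> P@v@S = U @ X @ V"
      by (intro exI[of _ "P@U"] exI[of _ X] exI[of _ "V@S"]) simp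
  qed
  moreover have "square_reduction u v \<Longrightarrow> u \<noteq> [] \<and> v \<noteq> []" for u v
    unfolding square_reduction_def by auto
  ultimately show ?thesis using h unfolding sq_adj_def sq_vertices_def by blast
qed

lemma sqc_cong0: "sq_connected u v \<Longrightarrow> sq_connected (P@u@S) (P@v@S)"
  unfolding sq_connected_def
proof (induction rule: rtrancl_induct)
  case base then show ?case by simp
next
  case (step y z)
  then have "(P@y@S, P@z@S) \<in> {(x, y). sq_adj x y}" using adj_cong by blast
  with step show ?case by (meson rtrancl_into_rtrancl)
qed

lemma sqc_cong: "sq_connected u v \<Longrightarrow> A = P@u@S \<Longrightarrow> B = P@v@S \<Longrightarrow> sq_connected A B"
  using sqc_cong0 by blast

lemma letter: "a \<in> set e \<Longrightarrow> sq_connected (e@[a]@e) e"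
proof -
  assume "a \<in> set e"
  then obtain p q where e: "e = p@[a]@q" by (metis append_Cons append_Nil split_list)
  have "sq_connected (p@[a]@q@[a]@p@[a]@q) (p@[a]@p@[a]@q@[a]@p@[a]@q)"
    by (rule red'[where U="[]" and X="p@[a]" and V="q@[a]@p@[a]@q"]) simp_all
  also have "sq_connected \<dots> (p@[a]@p@[a]@q)"
    by (rule red[where U="p" and X="[a]@p@[a]@q" and V="[]"]) simp_all
  also have "sq_connected \<dots> (p@[a]@q)"
    by (rule red[where U="[]" and X="p@[a]" and V="q"]) simp_all
  finally show ?thesis using e by simp
qed

lemma quasi:
  assumes hf: "sq_connected (e@f@e) e" and hg: "sq_connected (e@g@e) e"
  shows "sq_connected (e@f@g@e) e"
proof -
  have "sq_connected (e@f@g@e) (e@f@g@e@f@e)"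
    by (rule sqc_cong[OF sqc_sym[OF hf], where P="e@f@g" and S="[]"]) simp_all
  also have "sq_connected \<dots> (e@g@e@f@g@e@f@e)"
    by (rule sqc_cong[OF sqc_sym[OF hg], where P="[]" and S="f@g@e@f@e"]) simp_all
  also have "sq_connected \<dots> (e@g@e@f@e)"
    by (rule red[where U="e" and X="g@e@f" and V="e"]) simp_all
  also have "sq_connected \<dots> (e@g@e)"
    by (rule sqc_cong[OF hf, where P="e@g" and S="[]"]) simp_all
  also have "sq_connected \<dots> e" by (rule hg)
  finally show ?thesis .
qed

lemma absorb: "set u \<subseteq> set e \<Longrightarrow> sq_connected (e@u@e) e"
proof (induction u)
  case Nil
  show ?case by (rule red[where U="[]" and X=e and V="[]"]) simp_all
next
  case (Cons a u)
  then have "sq_connected (e@[a]@e) e" "sq_connected (e@u@e) e"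
    using letter by auto
  then show ?case using quasi by fastforce
qed

lemma middle:
  assumes "set z \<subseteq> set x" "set x = set y"
  shows "sq_connected (x@z@y) (x@y)"
proof -
  have hx: "sq_connected x (x@y@x)" using absorb[of y x] assms sqc_sym by auto
  have hy: "sq_connected y (y@x@y)" using absorb[of x y] assms sqc_sym by auto
  have "sq_connected (x@z@y) ((x@y@x)@z@y)"
    by (rule sqc_cong[OF hx, where P="[]" and S="z@y"]) simp_all
  also have "sq_connected \<dots> ((x@y)@(x@z@y)@(x@y))"
    by (rule sqc_cong[OF hy, where P="x@y@x@z" and S="[]"]) simp_all
  also have "sq_connected \<dots> (x@y)"
    by (rule absorb) (use assms in auto)
  finally show ?thesis .
qed

lemma key:
  assumes "w = x@m" "w = m'@y" "set x = set w" "set y = set w"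
  shows "sq_connected w (x@y)"
proof -
  have "m'@y = x@m" using assms(1,2) by simp
  then obtain us where "(m' = x@us \<and> us@y = m) \<or> (m'@us = x \<and> y = us@m)"
    unfolding append_eq_append_conv2 by blast
  then show ?thesis
  proof
    assume h: "m' = x@us \<and> us@y = m"
    then have w: "w = x@us@y" using assms(1) by simp
    have "set w = set x \<union> set us \<union> set y" unfolding w by auto
    then have "set us \<subseteq> set x" using assms(3) by blast
    moreover have "set x = set y" using assms(3,4) by simp
    ultimately have "sq_connected (x@us@y) (x@y)" by (rule middle)
    then show ?thesis unfolding w .
  next
    assume h: "m'@us = x \<and> y = us@m"
    then have w: "w = m'@us@m" and xy: "x@y = m'@us@us@m" using assms(1) by auto
    show ?thesis unfolding w xy
      by (rule red'[where U=m' and X=us and V=m]) simp_all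
  qed
qed

lemma prefix_dec: "w \<noteq> [] \<Longrightarrow> \<exists>p a m. w = p@[a]@m \<and> set (p@[a]) = set w \<and> set p \<noteq> set w"
proof (induction w rule: rev_induct)
  case Nil then show ?case by simp
next
  case (snoc c w0)
  show ?case
  proof (cases "set w0 = set (w0@[c])")
    case True
    then have "w0 \<noteq> []" by auto
    with snoc.IH obtain p a m where "w0 = p@[a]@m" "set (p@[a]) = set w0" "set p \<noteq> set w0" by blast
    then show ?thesis using True by (intro exI[of _ p] exI[of _ a] exI[of _ "m@[c]"]) simp
  next
    case False
    then show ?thesis by (intro exI[of _ w0] exI[of _ c] exI[of _ "[]"]) simp
  qed
qed

fun bnd :: "nat \<Rightarrow> nat" where
  "bnd 0 = 0" | "bnd (Suc n) = 2 * bnd n + 2"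

lemma bound: "card (set w) \<le> n \<Longrightarrow> \<exists>w'. length w' \<le> bnd n \<and> sq_connected w w'"
proof (induction n arbitrary: w)
  case 0
  then have "w = []" by simp
  then show ?case using sqc_refl by auto
next
  case (Suc n)
  show ?case
  proof (cases "w = []")
    case True
    then show ?thesis using sqc_refl by (intro exI[of _ w]) simp
  next
    case False
    then obtain p a m where pd: "w = p@[a]@m" "set (p@[a]) = set w" "set p \<noteq> set w"
      using prefix_dec by blast
    from False have "rev w \<noteq> []" by simp
    then obtain s b m' where sd: "rev w = s@[b]@m'" "set (s@[b]) = set (rev w)" "set s \<noteq> set (rev w)"
      using prefix_dec by blast
    have w2: "w = rev m' @ [b] @ rev s" using sd(1) by (metis append.assoc rev_append rev_rev_ident rev_singleton_conv)
    have sp: "set p \<subset> set w" using pd(2) pd(3) unfolding set_append by blast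
    have ss: "set (rev s) \<subset> set w" using sd(2) sd(3) unfolding set_rev set_append by blast
    have cp: "card (set p) \<le> n" using psubset_card_mono[OF _ sp] Suc.prems by simp
    have cs: "card (set (rev s)) \<le> n" using psubset_card_mono[OF _ ss] Suc.prems by simp
    obtain p' where p': "length p' \<le> bnd n" "sq_connected p p'" using Suc.IH[OF cp] by blast
    obtain s' where s': "length s' \<le> bnd n" "sq_connected (rev s) s'" using Suc.IH[OF cs] by blast
    have "sq_connected w ((p@[a]) @ ([b] @ rev s))"
    proof (rule key[where m=m and m'="rev m'"])
      show "w = (p @ [a]) @ m" using pd(1) by simp
      show "w = rev m' @ [b] @ rev s" by (rule w2)
      show "set (p @ [a]) = set w" by (rule pd(2))
      have e1: "set ([b] @ rev s) = set (s @ [b])" by auto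
      have e2: "set (rev w) = set w" by (rule set_rev)
      show "set ([b] @ rev s) = set w" using e1 e2 sd(2) by (simp only:)
    qed
    also have "sq_connected \<dots> (p'@[a,b] @ rev s)"
      by (rule sqc_cong[OF p'(2), where P="[]" and S="[a,b] @ rev s"]) simp_all
    also have "sq_connected \<dots> (p'@[a,b] @ s')"
      by (rule sqc_cong[OF s'(2), where P="p'@[a,b]" and S="[]"]) simp_all
    finally show ?thesis using p'(1) s'(1) by (intro exI[of _ "p'@[a,b] @ s'"]) simp
  qed
qed

theorem theorem2p10:
  assumes "card (UNIV :: ('a::finite) set) = 3"
  shows "finite (sq_components :: 'a list set set)"
proof -
  let ?N = "bnd (card (UNIV :: 'a set))"
  have "sq_components \<subseteq> (\<lambda>w. {u. sq_connected w u}) ` {xs :: 'a list. set xs \<subseteq> UNIV \<and> length xs \<le> ?N}"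
  proof
    fix S assume "S \<in> (sq_components :: 'a list set set)"
    then obtain w :: "'a list" where S: "S = {u. sq_connected w u}"
      unfolding sq_components_def by blast
    have "card (set w) \<le> card (UNIV :: 'a set)" by (rule card_mono) simp_all
    then obtain w' where w': "length w' \<le> ?N" "sq_connected w w'" using bound by blast
    have "S = {u. sq_connected w' u}"
      using S w'(2) sqc_sym sqc_trans by blast
    then show "S \<in> (\<lambda>w. {u. sq_connected w u}) ` {xs :: 'a list. set xs \<subseteq> UNIV \<and> length xs \<le> ?N}"
      using w'(1) by blast
  qed
  moreover have "finite {xs :: 'a list. set xs \<subseteq> UNIV \<and> length xs \<le> ?N}"
    by (rule finite_lists_length_le) simp
  ultimately show ?thesis by (meson finite_imageI finite_subset)
qed

end
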